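(* Let $(A,\circ,[\cdot,\cdot])$ be a dual pre-Poisson algebra. (a) Let $T:V\to A$ be an $\mathcal{O}$-operator on $(A,\circ,[\cdot,\cdot])$ associated to a representation $(V;l_\circ,r_\circ,l_{[\cdot,\cdot]},r_{[\cdot,\cdot]})$. Define on $V$: $u\rhd_V v=l_\circ(T(u))v$, $u\lhd_V v=r_\circ(T(v))u$, $u\succ_V v=l_{[\cdot,\cdot]}(T(u))v$, $u\prec_V v=r_{[\cdot,\cdot]}(T(v))u$. Then $(V,\rhd_V,\lhd_V,\succ_V,\prec_V)$ is a pre-dual pre-Poisson algebra, and $T$ is a homomorphism of dual pre-Poisson algebras from $(V,\circ_V,[\cdot,\cdot]_V)$, where $u\circ_V v=u\rhd_V v+u\lhd_V v$ and $[u,v]_V=u\succ_V v+u\prec_V v$, to $(A,\circ,[\cdot,\cdot])$. (b) Let $P:A\to A$ be a Rota–Baxter operator on $(A,\circ,[\cdot,\cdot])$ and define $x\rhd y=P(x)\circ y$, $x\lhd y=x\circ P(y)$, $x\succ y=[P(x),y]$, $x\prec y=[x,P(y)]$. Then $(A,\rhd,\lhd,\succ,\prec)$ is a pre-dual pre-Poisson algebra, and $P$ is a homomorphism of dual pre-Poisson algebras from $(A,\circ',[\cdot,\cdot]')$, where $x\circ' y=x\rhd y+x\lhd y$ and $[x,y]'=x\succ y+x\prec y$, to $(A,\circ,[\cdot,\cdot])$.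
   Context: Field $\mathbb{F}$ of characteristic $0$. Dual pre-Poisson algebra: $x\circ(y\circ z)=(x\circ y)\circ z=(y\circ x)\circ z$; $[x,[y,z]]=[[x,y],z]+[y,[x,z]]$; $[x,y\circ z]=[x,y]\circ z+y\circ[x,z]$; $[x\circ y,z]=x\circ[y,z]+y\circ[x,z]$; $[x,y]\circ z=-[y,x]\circ z$. A homomorphism $f$ preserves both operations. A representation $(V;l_\circ,r_\circ,l_{[\cdot,\cdot]},r_{[\cdot,\cdot]})$: linear maps $A\to\mathrm{End}(V)$ with, for all $x,y$: $r_\circ(x)r_\circ(y)=r_\circ(y\circ x)=l_\circ(y)r_\circ(x)=r_\circ(x)l_\circ(y)$; $l_\circ(x\circ y)=l_\circ(x)l_\circ(y)=l_\circ(y)l_\circ(x)$; $l_{[\cdot,\cdot]}([x,y])=l_{[\cdot,\cdot]}(x)l_{[\cdot,\cdot]}(y)-l_{[\cdot,\cdot]}(y)l_{[\cdot,\cdot]}(x)$; $r_{[\cdot,\cdot]}([x,y])=r_{[\cdot,\cdot]}(y)r_{[\cdot,\cdot]}(x)+l_{[\cdot,\cdot]}(x)r_{[\cdot,\cdot]}(y)$; $r_{[\cdot,\cdot]}(x)r_{[\cdot,\cdot]}(y)=-r_{[\cdot,\cdot]}(x)l_{[\cdot,\cdot]}(y)$; $r_{[\cdot,\cdot]}(x\circ y)=r_\circ(y)r_{[\cdot,\cdot]}(x)+l_\circ(x)r_{[\cdot,\cdot]}(y)$; $l_{[\cdot,\cdot]}(x)r_\circ(y)=r_\circ(y)l_{[\cdot,\cdot]}(x)+r_\circ([x,y])$;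 $l_{[\cdot,\cdot]}(x)l_\circ(y)=l_\circ([x,y])+l_\circ(y)l_{[\cdot,\cdot]}(x)$; $r_{[\cdot,\cdot]}(x)r_\circ(y)=r_\circ([y,x])+l_\circ(y)r_{[\cdot,\cdot]}(x)$; $l_{[\cdot,\cdot]}(x\circ y)=l_\circ(x)l_{[\cdot,\cdot]}(y)+l_\circ(y)l_{[\cdot,\cdot]}(x)$; $r_{[\cdot,\cdot]}(x)(l_\circ-r_\circ)(y)=0$; $r_\circ(x)(l_{[\cdot,\cdot]}+r_{[\cdot,\cdot]})(y)=0$; $l_\circ([x,y]+[y,x])=0$. An $\mathcal{O}$-operator: linear $T:V\to A$ with $T(u)\circ T(v)=T(l_\circ(T(u))v+r_\circ(T(v))u)$ and $[T(u),T(v)]=T(l_{[\cdot,\cdot]}(T(u))v+r_{[\cdot,\cdot]}(T(v))u)$. A Rota–Baxter operator: linear $P:A\to A$ with $P(x)\circ P(y)=P(P(x)\circ y+x\circ P(y))$ and $[P(x),P(y)]=P([P(x),y]+[x,P(y)])$. A pre-dual pre-Poisson algebra: bilinear $\rhd,\lhd,\succ,\prec$ with, for all $x,y,z$: $x\lhd(y\lhd z+y\rhd z)=(x\lhd y)\lhd z=(y\rhd x)\lhd z=y\rhd(x\lhd z)$; $x\rhd(y\rhd z)=(x\lhd y+x\rhd y)\rhd z=(y\lhd x+y\rhd x)\rhd z$; $(x\prec y+x\succ y)\succ z=x\succ(y\succ z)-y\succ(x\succ z)$; $(x\succ y)\prec z=-(y\prec x)\prec z$; $x\prec(y\prec z+y\succ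 z)=(x\prec y)\prec z+y\succ(x\prec z)$; $x\prec(y\rhd z+y\lhd z)=(x\prec y)\lhd z+y\rhd(x\prec z)$; $x\succ(y\lhd z)=(x\succ y)\lhd z+y\lhd(x\succ z+x\prec z)$; $x\succ(y\rhd z)=(x\succ y+x\prec y)\rhd z+y\rhd(x\succ z)$; $(x\lhd y)\prec z=x\lhd(y\succ z+y\prec z)+y\rhd(x\prec z)$; $(x\rhd y+x\lhd y)\succ z=x\rhd(y\succ z)+y\rhd(x\succ z)$; $(x\rhd y-y\lhd x)\prec z=0$; $(x\succ y+y\prec x)\lhd z=0$; $(x\succ y+x\prec y+y\succ x+y\prec x)\rhd z=0$. *)

theory Defs
  imports Main "HOL.Vector_Spaces"
begin

definition bilin :: "('k::field \<Rightarrow> 'a::ab_group_add \<Rightarrow> 'a) \<Rightarrow> ('a \<Rightarrow> 'a \<Rightarrow> 'a) \<Rightarrow> bool" where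
  "bilin s m \<longleftrightarrow> (\<forall>x. Vector_Spaces.linear s s (m x)) \<and> (\<forall>y. Vector_Spaces.linear s s (\<lambda>x. m x y))"

definition dual_pre_poisson ::
  "('k::field \<Rightarrow> 'a::ab_group_add \<Rightarrow> 'a) \<Rightarrow> ('a \<Rightarrow> 'a \<Rightarrow> 'a) \<Rightarrow> ('a \<Rightarrow> 'a \<Rightarrow> 'a) \<Rightarrow> bool" where
  "dual_pre_poisson s circ br \<longleftrightarrow>
     vector_space s \<and> bilin s circ \<and> bilin s br \<and>
     (\<forall>x y z.
        circ x (circ y z) = circ (circ x y) z \<and>
        circ (circ x y) z = circ (circ y x) z \<and>
        br x (br y z) = br (br x y) z + br y (br x z) \<and>
        br x (circ y z) = circ (br x y) z + circ y (br x z) \<and>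
        br (circ x y) z = circ x (br y z) + circ y (br x z) \<and>
        circ (br x y) z = - circ (br y x) z)"

definition dpp_hom ::
  "('k::field \<Rightarrow> 'a::ab_group_add \<Rightarrow> 'a) \<Rightarrow> ('a \<Rightarrow> 'a \<Rightarrow> 'a) \<Rightarrow> ('a \<Rightarrow> 'a \<Rightarrow> 'a) \<Rightarrow>
   ('k \<Rightarrow> 'b::ab_group_add \<Rightarrow> 'b) \<Rightarrow> ('b \<Rightarrow> 'b \<Rightarrow> 'b) \<Rightarrow> ('b \<Rightarrow> 'b \<Rightarrow> 'b) \<Rightarrow> ('a \<Rightarrow> 'b) \<Rightarrow> bool" where
  "dpp_hom s1 circ1 br1 s2 circ2 br2 f \<longleftrightarrow>
     Vector_Spaces.linear s1 s2 f \<and>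
     (\<forall>x y. f (circ1 x y) = circ2 (f x) (f y) \<and> f (br1 x y) = br2 (f x) (f y))"

definition lin_to_end ::
  "('k::field \<Rightarrow> 'a::ab_group_add \<Rightarrow> 'a) \<Rightarrow> ('k \<Rightarrow> 'v::ab_group_add \<Rightarrow> 'v) \<Rightarrow> ('a \<Rightarrow> 'v \<Rightarrow> 'v) \<Rightarrow> bool" where
  "lin_to_end sA sV l \<longleftrightarrow>
     (\<forall>x. Vector_Spaces.linear sV sV (l x)) \<and> (\<forall>v. Vector_Spaces.linear sA sV (\<lambda>x. l x v))"

text \<open>Representation (V; lc, rc, lb, rb) of the dual pre-Poisson algebra (A, circ, br);
  compositions of endomorphisms are written pointwise.\<close>

definition dpp_rep ::
  "('k::field \<Rightarrow> 'a::ab_group_add \<Rightarrow> 'a) \<Rightarrow> ('a \<Rightarrow> 'a \<Rightarrow> 'a) \<Rightarrow> ('a \<Rightarrow> 'a \<Rightarrow> 'a) \<Rightarrow>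
   ('k \<Rightarrow> 'v::ab_group_add \<Rightarrow> 'v) \<Rightarrow> ('a \<Rightarrow> 'v \<Rightarrow> 'v) \<Rightarrow> ('a \<Rightarrow> 'v \<Rightarrow> 'v) \<Rightarrow>
   ('a \<Rightarrow> 'v \<Rightarrow> 'v) \<Rightarrow> ('a \<Rightarrow> 'v \<Rightarrow> 'v) \<Rightarrow> bool" where
  "dpp_rep sA circ br sV lc rc lb rb \<longleftrightarrow>
     vector_space sV \<and>
     lin_to_end sA sV lc \<and> lin_to_end sA sV rc \<and> lin_to_end sA sV lb \<and> lin_to_end sA sV rb \<and>
     (\<forall>x y v.
        rc x (rc y v) = rc (circ y x) v \<and>
        rc (circ y x) v = lc y (rc x v) \<and>
        lc y (rc x v) = rc x (lc y v) \<and>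
        lc (circ x y) v = lc x (lc y v) \<and>
        lc x (lc y v) = lc y (lc x v) \<and>
        lb (br x y) v = lb x (lb y v) - lb y (lb x v) \<and>
        rb (br x y) v = rb y (rb x v) + lb x (rb y v) \<and>
        rb x (rb y v) = - rb x (lb y v) \<and>
        rb (circ x y) v = rc y (rb x v) + lc x (rb y v) \<and>
        lb x (rc y v) = rc y (lb x v) + rc (br x y) v \<and>
        lb x (lc y v) = lc (br x y) v + lc y (lb x v) \<and>
        rb x (rc y v) = rc (br y x) v + lc y (rb x v) \<and>
        lb (circ x y) v = lc x (lb y v) + lc y (lb x v) \<and>
        rb x (lc y v - rc y v) = 0 \<and>
        rc x (lb y v + rb y v) = 0 \<and>
        lc (br x y + br y x) v = 0)"

definition O_operator ::
  "('k::field \<Rightarrow> 'a::ab_group_add \<Rightarrow> 'a) \<Rightarrow> ('a \<Rightarrow> 'a \<Rightarrow> 'a) \<Rightarrow> ('a \<Rightarrow> 'a \<Rightarrow> 'a) \<Rightarrow>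
   ('k \<Rightarrow> 'v::ab_group_add \<Rightarrow> 'v) \<Rightarrow> ('a \<Rightarrow> 'v \<Rightarrow> 'v) \<Rightarrow> ('a \<Rightarrow> 'v \<Rightarrow> 'v) \<Rightarrow>
   ('a \<Rightarrow> 'v \<Rightarrow> 'v) \<Rightarrow> ('a \<Rightarrow> 'v \<Rightarrow> 'v) \<Rightarrow> ('v \<Rightarrow> 'a) \<Rightarrow> bool" where
  "O_operator sA circ br sV lc rc lb rb T \<longleftrightarrow>
     Vector_Spaces.linear sV sA T \<and>
     (\<forall>u v. circ (T u) (T v) = T (lc (T u) v + rc (T v) u) \<and>
            br (T u) (T v) = T (lb (T u) v + rb (T v) u))"

definition rota_baxter ::
  "('k::field \<Rightarrow> 'a::ab_group_add \<Rightarrow> 'a) \<Rightarrow> ('a \<Rightarrow> 'a \<Rightarrow> 'a) \<Rightarrow> ('a \<Rightarrow> 'a \<Rightarrow> 'a) \<Rightarrow> ('a \<Rightarrow> 'a) \<Rightarrow> bool" where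
  "rota_baxter s circ br P \<longleftrightarrow>
     Vector_Spaces.linear s s P \<and>
     (\<forall>x y. circ (P x) (P y) = P (circ (P x) y + circ x (P y)) \<and>
            br (P x) (P y) = P (br (P x) y + br x (P y)))"

text \<open>Pre-dual pre-Poisson algebra (A, rt, lt, sc, pc), where
  rt = \<rhd>, lt = \<lhd>, sc = \<succ>, pc = \<prec>.\<close>

definition pre_dual_pre_poisson ::
  "('k::field \<Rightarrow> 'a::ab_group_add \<Rightarrow> 'a) \<Rightarrow> ('a \<Rightarrow> 'a \<Rightarrow> 'a) \<Rightarrow> ('a \<Rightarrow> 'a \<Rightarrow> 'a) \<Rightarrow>
   ('a \<Rightarrow> 'a \<Rightarrow> 'a) \<Rightarrow> ('a \<Rightarrow> 'a \<Rightarrow> 'a) \<Rightarrow> bool" where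
  "pre_dual_pre_poisson s rt lt sc pc \<longleftrightarrow>
     vector_space s \<and> bilin s rt \<and> bilin s lt \<and> bilin s sc \<and> bilin s pc \<and>
     (\<forall>x y z.
        lt x (lt y z + rt y z) = lt (lt x y) z \<and>
        lt (lt x y) z = lt (rt y x) z \<and>
        lt (rt y x) z = rt y (lt x z) \<and>
        rt x (rt y z) = rt (lt x y + rt x y) z \<and>
        rt (lt x y + rt x y) z = rt (lt y x + rt y x) z \<and>
        sc (pc x y + sc x y) z = sc x (sc y z) - sc y (sc x z) \<and>
        pc (sc x y) z = - pc (pc y x) z \<and>
        pc x (pc y z + sc y z) = pc (pc x y) z + sc y (pc x z) \<and>
        pc x (rt y z + lt y z) = lt (pc x y) z + rt y (pc x z) \<and>
        sc x (lt y z) = lt (sc x y) z + lt y (sc x z + pc x z) \<and>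
        sc x (rt y z) = rt (sc x y + pc x y) z + rt y (sc x z) \<and>
        pc (lt x y) z = lt x (sc y z + pc y z) + rt y (pc x z) \<and>
        sc (rt x y + lt x y) z = rt x (sc y z) + rt y (sc x z) \<and>
        pc (rt x y - lt y x) z = 0 \<and>
        lt (sc x y + pc y x) z = 0 \<and>
        rt (sc x y + pc x y + sc y x + pc y x) z = 0)"

end

theory Submission imports Defs begin

lemma lin_add: "Vector_Spaces.linear s1 s2 f \<Longrightarrow> f (x + y) = f x + f y"
  by (simp add: linear_iff)
lemma lin_neg: "Vector_Spaces.linear s1 s2 f \<Longrightarrow> f (- x) = - f x"
proof -
  assume l: "Vector_Spaces.linear s1 s2 f"
  have "f 0 = f 0 + f 0" using lin_add[OF l, of 0 0] by simp
  then have z: "f 0 = 0" by simp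
  have "f x + f (- x) = 0" using lin_add[OF l, of x "- x"] z by simp
  then show ?thesis by (simp add: eq_neg_iff_add_eq_0 add.commute)
qed
lemma lin_diff: "Vector_Spaces.linear s1 s2 f \<Longrightarrow> f (x - y) = f x - f y"
proof -
  assume l: "Vector_Spaces.linear s1 s2 f"
  show ?thesis using lin_add[OF l, of x "- y"] lin_neg[OF l, of y] by simp
qed
lemma lin_comp: "Vector_Spaces.linear s1 s2 f \<Longrightarrow> Vector_Spaces.linear s2 s3 g \<Longrightarrow> Vector_Spaces.linear s1 s3 (\<lambda>x. g (f x))"
  using Vector_Spaces.linear_compose[of s1 s2 f s3 g] by (simp add: o_def)

lemma partA:
  fixes sA :: "'k::field \<Rightarrow> 'a::ab_group_add \<Rightarrow> 'a"
    and circ br :: "'a \<Rightarrow> 'a \<Rightarrow> 'a"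
    and sV :: "'k \<Rightarrow> 'v::ab_group_add \<Rightarrow> 'v"
    and lc rc lb rb :: "'a \<Rightarrow> 'v \<Rightarrow> 'v"
    and T :: "'v \<Rightarrow> 'a"
  assumes A: "dual_pre_poisson sA circ br"
   and R: "dpp_rep sA circ br sV lc rc lb rb" and O: "O_operator sA circ br sV lc rc lb rb T"
  shows "pre_dual_pre_poisson sV (\<lambda>u v. lc (T u) v) (\<lambda>u v. rc (T v) u)
                                (\<lambda>u v. lb (T u) v) (\<lambda>u v. rb (T v) u) \<and>
        dpp_hom sV (\<lambda>u v. lc (T u) v + rc (T v) u) (\<lambda>u v. lb (T u) v + rb (T v) u)
                sA circ br T"
proof -
  have linT: "Vector_Spaces.linear sV sA T" using O by (simp add: O_operator_def)
  have vV: "vector_space sV" using R by (simp add: dpp_rep_def)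
  have Oc: "\<And>u v. T (lc (T u) v + rc (T v) u) = circ (T u) (T v)"
    and Ob: "\<And>u v. T (lb (T u) v + rb (T v) u) = br (T u) (T v)"
    using O by (simp_all add: O_operator_def)
  have Oc': "\<And>u v. T (rc (T v) u + lc (T u) v) = circ (T u) (T v)"
    and Ob': "\<And>u v. T (rb (T v) u + lb (T u) v) = br (T u) (T v)"
    using Oc Ob by (simp_all add: add.commute)
  have TA: "\<And>x y. T (x + y) = T x + T y" using linT lin_add by blast
  have TD: "\<And>x y. T (x - y) = T x - T y" using linT lin_diff by blast
  have LE: "lin_to_end sA sV lc" "lin_to_end sA sV rc" "lin_to_end sA sV lb" "lin_to_end sA sV rb"
    using R by (simp_all add: dpp_rep_def)
  have bil: "\<And>l. lin_to_end sA sV l \<Longrightarrow> bilin sV (\<lambda>u v. l (T u) v) \<and> bilin sV (\<lambda>u v. l (T v) u)"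
    unfolding bilin_def lin_to_end_def using linT lin_comp by blast
  have r1: "\<And>x y v. rc x (rc y v) = rc (circ y x) v"
   and r2: "\<And>x y v. rc (circ y x) v = lc y (rc x v)"
   and r3: "\<And>x y v. lc y (rc x v) = rc x (lc y v)"
   and r4: "\<And>x y v. lc (circ x y) v = lc x (lc y v)"
   and r5: "\<And>x y v. lc x (lc y v) = lc y (lc x v)"
   and r6: "\<And>x y v. lb (br x y) v = lb x (lb y v) - lb y (lb x v)"
   and r7: "\<And>x y v. rb (br x y) v = rb y (rb x v) + lb x (rb y v)"
   and r8: "\<And>x y v. rb x (rb y v) = - rb x (lb y v)"
   and r9: "\<And>x y v. rb (circ x y) v = rc y (rb x v) + lc x (rb y v)"
   and r10: "\<And>x y v. lb x (rc y v) = rc y (lb x v) + rc (br x y) v"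
   and r11: "\<And>x y v. lb x (lc y v) = lc (br x y) v + lc y (lb x v)"
   and r12: "\<And>x y v. rb x (rc y v) = rc (br y x) v + lc y (rb x v)"
   and r13: "\<And>x y v. lb (circ x y) v = lc x (lb y v) + lc y (lb x v)"
   and r14: "\<And>x y v. rb x (lc y v - rc y v) = 0"
   and r15: "\<And>x y v. rc x (lb y v + rb y v) = 0"
   and r16: "\<And>x y v. lc (br x y + br y x) v = 0"
    using R unfolding dpp_rep_def by blast+
  have H: "
        rc (T (rc (T z) y + lc (T y) z)) x = rc (T z) (rc (T y) x) \<and>
        rc (T z) (rc (T y) x) = rc (T z) (lc (T y) x) \<and>
        rc (T z) (lc (T y) x) = lc (T y) (rc (T z) x) \<and>
        lc (T x) (lc (T y) z) = lc (T (rc (T y) x + lc (T x) y)) z \<and>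
        lc (T (rc (T y) x + lc (T x) y)) z = lc (T (rc (T x) y + lc (T y) x)) z \<and>
        lb (T (rb (T y) x + lb (T x) y)) z = lb (T x) (lb (T y) z) - lb (T y) (lb (T x) z) \<and>
        rb (T z) (lb (T x) y) = - rb (T z) (rb (T x) y) \<and>
        rb (T (rb (T z) y + lb (T y) z)) x = rb (T z) (rb (T y) x) + lb (T y) (rb (T z) x) \<and>
        rb (T (lc (T y) z + rc (T z) y)) x = rc (T z) (rb (T y) x) + lc (T y) (rb (T z) x) \<and>
        lb (T x) (rc (T z) y) = rc (T z) (lb (T x) y) + rc (T (lb (T x) z + rb (T z) x)) y \<and>
        lb (T x) (lc (T y) z) = lc (T (lb (T x) y + rb (T y) x)) z + lc (T y) (lb (T x) z) \<and>
        rb (T z) (rc (T y) x) = rc (T (lb (T y) z + rb (T z) y)) x + lc (T y) (rb (T z) x) \<and>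
        lb (T (lc (T x) y + rc (T y) x)) z = lc (T x) (lb (T y) z) + lc (T y) (lb (T x) z) \<and>
        rb (T z) (lc (T x) y - rc (T x) y) = 0 \<and>
        rc (T z) (lb (T x) y + rb (T x) y) = 0 \<and>
        lc (T (lb (T x) y + rb (T y) x + lb (T y) x + rb (T x) y)) z = 0" for x y z
  proof -
    have e16: "T (lb (T x) y + rb (T y) x + lb (T y) x + rb (T x) y) = br (T x) (T y) + br (T y) (T x)"
      proof -
        have "lb (T x) y + rb (T y) x + lb (T y) x + rb (T x) y = (lb (T x) y + rb (T y) x) + (lb (T y) x + rb (T x) y)"
          by (simp only: add.assoc)
        then show ?thesis by (simp only: TA[of "lb (T x) y + rb (T y) x" "lb (T y) x + rb (T x) y"] Ob)
      qed
    have g1: "rc (T (rc (T z) y + lc (T y) z)) x = rc (T z) (rc (T y) x)"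
      by (simp only: Oc' r1)
    have g2: "rc (T z) (rc (T y) x) = rc (T z) (lc (T y) x)"
      by (simp only: r1 r2 r3)
    have g3: "rc (T z) (lc (T y) x) = lc (T y) (rc (T z) x)"
      by (simp only: r3)
    have g4: "lc (T x) (lc (T y) z) = lc (T (rc (T y) x + lc (T x) y)) z"
      by (simp only: Oc' r4)
    have g5: "lc (T (rc (T y) x + lc (T x) y)) z = lc (T (rc (T x) y + lc (T y) x)) z"
      by (simp only: Oc' r4, rule r5)
    have g6: "lb (T (rb (T y) x + lb (T x) y)) z = lb (T x) (lb (T y) z) - lb (T y) (lb (T x) z)"
      by (simp only: Ob' r6)
    have g7: "rb (T z) (lb (T x) y) = - rb (T z) (rb (T x) y)"
      by (simp only: r8 minus_minus)
    have g8: "rb (T (rb (T z) y + lb (T y) z)) x = rb (T z) (rb (T y) x) + lb (T y) (rb (T z) x)"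
      by (simp only: Ob' r7)
    have g9: "rb (T (lc (T y) z + rc (T z) y)) x = rc (T z) (rb (T y) x) + lc (T y) (rb (T z) x)"
      by (simp only: Oc r9)
    have g10: "lb (T x) (rc (T z) y) = rc (T z) (lb (T x) y) + rc (T (lb (T x) z + rb (T z) x)) y"
      by (simp only: Ob r10)
    have g11: "lb (T x) (lc (T y) z) = lc (T (lb (T x) y + rb (T y) x)) z + lc (T y) (lb (T x) z)"
      by (simp only: Ob r11)
    have g12: "rb (T z) (rc (T y) x) = rc (T (lb (T y) z + rb (T z) y)) x + lc (T y) (rb (T z) x)"
      by (simp only: Ob r12)
    have g13: "lb (T (lc (T x) y + rc (T y) x)) z = lc (T x) (lb (T y) z) + lc (T y) (lb (T x) z)"
      by (simp only: Oc r13)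
    have g16: "lc (T (lb (T x) y + rb (T y) x + lb (T y) x + rb (T x) y)) z = 0"
      by (simp only: e16 r16)
    show ?thesis
      by (intro conjI g1 g2 g3 g4 g5 g6 g7 g8 g9 g10 g11 g12 g13 r14 r15 g16)
  qed
  have b1: "bilin sV (\<lambda>u v. lc (T u) v)" "bilin sV (\<lambda>u v. rc (T v) u)"
     "bilin sV (\<lambda>u v. lb (T u) v)" "bilin sV (\<lambda>u v. rb (T v) u)"
    using bil LE by blast+
  show ?thesis
    unfolding pre_dual_pre_poisson_def dpp_hom_def
    apply (intro conjI vV b1 linT allI)
    apply (rule H[THEN conjunct1])
    apply (rule H[THEN conjunct2, THEN conjunct1])
    apply (rule H[THEN conjunct2, THEN conjunct2, THEN conjunct1])
    apply (rule H[THEN conjunct2, THEN conjunct2, THEN conjunct2, THEN conjunct1])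
    apply (rule H[THEN conjunct2, THEN conjunct2, THEN conjunct2, THEN conjunct2, THEN conjunct1])
    apply (rule H[THEN conjunct2, THEN conjunct2, THEN conjunct2, THEN conjunct2, THEN conjunct2, THEN conjunct1])
    apply (rule H[THEN conjunct2, THEN conjunct2, THEN conjunct2, THEN conjunct2, THEN conjunct2, THEN conjunct2, THEN conjunct1])
    apply (rule H[THEN conjunct2, THEN conjunct2, THEN conjunct2, THEN conjunct2, THEN conjunct2, THEN conjunct2, THEN conjunct2, THEN conjunct1])
    apply (rule H[THEN conjunct2, THEN conjunct2, THEN conjunct2, THEN conjunct2, THEN conjunct2, THEN conjunct2, THEN conjunct2, THEN conjunct2, THEN conjunct1])
    apply (rule H[THEN conjunct2, THEN conjunct2, THEN conjunct2, THEN conjunct2, THEN conjunct2, THEN conjunct2, THEN conjunct2, THEN conjunct2, THEN conjunct2, THEN conjunct1])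
    apply (rule H[THEN conjunct2, THEN conjunct2, THEN conjunct2, THEN conjunct2, THEN conjunct2, THEN conjunct2, THEN conjunct2, THEN conjunct2, THEN conjunct2, THEN conjunct2, THEN conjunct1])
    apply (rule H[THEN conjunct2, THEN conjunct2, THEN conjunct2, THEN conjunct2, THEN conjunct2, THEN conjunct2, THEN conjunct2, THEN conjunct2, THEN conjunct2, THEN conjunct2, THEN conjunct2, THEN conjunct1])
    apply (rule H[THEN conjunct2, THEN conjunct2, THEN conjunct2, THEN conjunct2, THEN conjunct2, THEN conjunct2, THEN conjunct2, THEN conjunct2, THEN conjunct2, THEN conjunct2, THEN conjunct2, THEN conjunct2, THEN conjunct1])
    apply (rule H[THEN conjunct2, THEN conjunct2, THEN conjunct2, THEN conjunct2, THEN conjunct2, THEN conjunct2, THEN conjunct2, THEN conjunct2, THEN conjunct2, THEN conjunct2, THEN conjunct2, THEN conjunct2, THEN conjunct2, THEN conjunct1])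
    apply (rule H[THEN conjunct2, THEN conjunct2, THEN conjunct2, THEN conjunct2, THEN conjunct2, THEN conjunct2, THEN conjunct2, THEN conjunct2, THEN conjunct2, THEN conjunct2, THEN conjunct2, THEN conjunct2, THEN conjunct2, THEN conjunct2, THEN conjunct1])
    apply (rule H[THEN conjunct2, THEN conjunct2, THEN conjunct2, THEN conjunct2, THEN conjunct2, THEN conjunct2, THEN conjunct2, THEN conjunct2, THEN conjunct2, THEN conjunct2, THEN conjunct2, THEN conjunct2, THEN conjunct2, THEN conjunct2, THEN conjunct2])
    apply (rule Oc)
    apply (rule Ob)
    done
qed

lemma adjoint_rep:
  fixes sA :: "'k::field \<Rightarrow> 'a::ab_group_add \<Rightarrow> 'a"
  assumes A: "dual_pre_poisson sA circ br"
  shows "dpp_rep sA circ br sA circ (\<lambda>x v. circ v x) br (\<lambda>x v. br v x)"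
proof -
  have vA: "vector_space sA" and bc: "bilin sA circ" and bb: "bilin sA br"
    using A by (simp_all add: dual_pre_poisson_def)
  have a1: "\<And>x y z. circ x (circ y z) = circ (circ x y) z"
   and a2: "\<And>x y z. circ (circ x y) z = circ (circ y x) z"
   and a3: "\<And>x y z. br x (br y z) = br (br x y) z + br y (br x z)"
   and a4: "\<And>x y z. br x (circ y z) = circ (br x y) z + circ y (br x z)"
   and a5: "\<And>x y z. br (circ x y) z = circ x (br y z) + circ y (br x z)"
   and a6: "\<And>x y z. circ (br x y) z = - circ (br y x) z"
    using A unfolding dual_pre_poisson_def by blast+
  have cA1: "\<And>x y z. circ x (y + z) = circ x y + circ x z"
   and cA2: "\<And>x y z. circ (x + y) z = circ x z + circ y z"
   and cD1: "\<And>x y z. circ x (y - z) = circ x y - circ x z"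
   and cD2: "\<And>x y z. circ (x - y) z = circ x z - circ y z"
   and bA1: "\<And>x y z. br x (y + z) = br x y + br x z"
   and bA2: "\<And>x y z. br (x + y) z = br x z + br y z"
   and bD2: "\<And>x y z. br (x - y) z = br x z - br y z"
    using bc bb unfolding bilin_def using lin_add lin_diff by blast+
  have le: "lin_to_end sA sA circ" "lin_to_end sA sA (\<lambda>x v. circ v x)"
     "lin_to_end sA sA br" "lin_to_end sA sA (\<lambda>x v. br v x)"
    using bc bb unfolding bilin_def lin_to_end_def by auto
  have anti: "br (br x y) z = - br (br y x) z" for x y z
  proof -
    have "br (br x y) z + br (br y x) z = 0"
      using a3[of x y z] a3[of y x z] by (simp add: algebra_simps)
    then show ?thesis by (simp add: eq_neg_iff_add_eq_0)
  qed
  show ?thesis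
    unfolding dpp_rep_def
  proof (intro conjI vA le allI)
    fix x y v
    show "circ (circ v y) x = circ v (circ y x)" by (simp only: a1)
    show "circ v (circ y x) = circ y (circ v x)" by (simp only: a1, rule a2)
    show "circ y (circ v x) = circ (circ y v) x" by (simp only: a1)
    show "circ (circ x y) v = circ x (circ y v)" by (simp only: a1)
    show "circ x (circ y v) = circ y (circ x v)" by (simp only: a1, rule a2)
    show "br (br x y) v = br x (br y v) - br y (br x v)" using a3[of x y v] by (simp add: eq_diff_eq)
    show "br v (br x y) = br (br v x) y + br x (br v y)" by (rule a3)
    show "br (br v y) x = - br (br y v) x" by (rule anti)
    show "br v (circ x y) = circ (br v x) y + circ x (br v y)" by (rule a4)
    show "br x (circ v y) = circ (br x v) y + circ v (br x y)" by (rule a4)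
    show "br x (circ y v) = circ (br x y) v + circ y (br x v)" by (rule a4)
    show "br (circ v y) x = circ v (br y x) + circ y (br v x)" by (rule a5)
    show "br (circ x y) v = circ x (br y v) + circ y (br x v)" by (rule a5)
    show "br (circ y v - circ v y) x = 0" by (simp add: bD2 a5 add.commute)
    show "circ (br y v + br v y) x = 0" by (simp add: cA2 a6[of y v])
    show "circ (br x y + br y x) v = 0" by (simp add: cA2 a6[of x y])
  qed
qed

theorem proposition3p27:
  fixes sA :: "'k::field_char_0 \<Rightarrow> 'a::ab_group_add \<Rightarrow> 'a"
    and circ br :: "'a \<Rightarrow> 'a \<Rightarrow> 'a"
    and sV :: "'k \<Rightarrow> 'v::ab_group_add \<Rightarrow> 'v"
    and lc rc lb rb :: "'a \<Rightarrow> 'v \<Rightarrow> 'v"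
    and T :: "'v \<Rightarrow> 'a"
    and P :: "'a \<Rightarrow> 'a"
  assumes "dual_pre_poisson sA circ br"
  shows
    "(dpp_rep sA circ br sV lc rc lb rb \<and> O_operator sA circ br sV lc rc lb rb T \<longrightarrow>
        pre_dual_pre_poisson sV (\<lambda>u v. lc (T u) v) (\<lambda>u v. rc (T v) u)
                                (\<lambda>u v. lb (T u) v) (\<lambda>u v. rb (T v) u) \<and>
        dpp_hom sV (\<lambda>u v. lc (T u) v + rc (T v) u) (\<lambda>u v. lb (T u) v + rb (T v) u)
                sA circ br T)
     \<and>
     (rota_baxter sA circ br P \<longrightarrow>
        pre_dual_pre_poisson sA (\<lambda>x y. circ (P x) y) (\<lambda>x y. circ x (P y))
                                (\<lambda>x y. br (P x) y) (\<lambda>x y. br x (P y)) \<and>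
        dpp_hom sA (\<lambda>x y. circ (P x) y + circ x (P y)) (\<lambda>x y. br (P x) y + br x (P y))
                sA circ br P)"
proof (rule conjI; rule impI)
  assume "dpp_rep sA circ br sV lc rc lb rb \<and> O_operator sA circ br sV lc rc lb rb T"
  then show "pre_dual_pre_poisson sV (\<lambda>u v. lc (T u) v) (\<lambda>u v. rc (T v) u)
                                (\<lambda>u v. lb (T u) v) (\<lambda>u v. rb (T v) u) \<and>
        dpp_hom sV (\<lambda>u v. lc (T u) v + rc (T v) u) (\<lambda>u v. lb (T u) v + rb (T v) u)
                sA circ br T"
    using partA[OF assms] by blast
next
  assume rb: "rota_baxter sA circ br P"
  have O: "O_operator sA circ br sA circ (\<lambda>x v. circ v x) br (\<lambda>x v. br v x) P"
    using rb unfolding rota_baxter_def O_operator_def by simp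
  show "pre_dual_pre_poisson sA (\<lambda>x y. circ (P x) y) (\<lambda>x y. circ x (P y))
                                (\<lambda>x y. br (P x) y) (\<lambda>x y. br x (P y)) \<and>
        dpp_hom sA (\<lambda>x y. circ (P x) y + circ x (P y)) (\<lambda>x y. br (P x) y + br x (P y))
                sA circ br P"
    using partA[OF assms adjoint_rep[OF assms] O] by simp
qed

end
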